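(* Assume the independence, boundedness and uniformly-lower-bounded-second-moment conditions in the context. Fix $t\ge2$, $\ell\in[t-1]$, fixed models $f_1,f_2$ with $|f_\lambda(\bm x)|\le M$, and $\delta\in(0,1)$. Define $\phi_R(t,\ell)=\max_{t-\ell\le j\le t-1}|\Delta^R_j-\Delta^R_t|$ and $\psi_R(t,\ell,\delta)=8M^2/v$ if $n_{t,\ell}=1$, and $\psi_R(t,\ell,\delta)=\sigma^R_{t,\ell}\sqrt{2\log(2/\delta)/n_{t,\ell}}+\frac{16(M^2/v)\log(2/\delta)}{3n_{t,\ell}}$ if $n_{t,\ell}\ge2$. Then with probability at least $1-\delta$, \[ |\widehat\Delta^R_{t,\ell}-\Delta^R_t|\le\phi_R(t,\ell)+\psi_R(t,\ell,\delta). \]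
   Context: For each period $j$, $P_j$ is a distribution of $(\bm x,y)\in\mathcal X\times\mathbb R$. Validation data $\{(\bm x^{\mathrm{va}}_{j,i},y^{\mathrm{va}}_{j,i})\}_{i=1}^{n_j}$ ($n_j\ge1$) are i.i.d. from $P_j$, independent across $j$. Boundedness: $M\ge1$ with $|y|\le M$ a.s. under each $P_j$. $V_j=\mathbb E_{P_j}[y^2]$, and there is $v>0$ with $V_j\ge v$ for all $j$. $L_j(f)=\mathbb E_{P_j}[(f(\bm x)-y)^2]$, $\Delta_j=L_j(f_1)-L_j(f_2)$, $\Delta^R_j=\Delta_j/V_j$. $n_{t,\ell}=\sum_{j=t-\ell}^{t-1}n_j$, $V_{t,\ell}=\frac1{n_{t,\ell}}\sum_{j=t-\ell}^{t-1}n_jV_j$. $u_{j,i}=[f_1(\bm x^{\mathrm{va}}_{j,i})-y^{\mathrm{va}}_{j,i}]^2-[f_2(\bm x^{\mathrm{va}}_{j,i})-y^{\mathrm{va}}_{j,i}]^2$, $\widehat\Delta_{t,\ell}=\frac1{n_{t,\ell}}\sum_{j=t-\ell}^{t-1}\sum_{i=1}^{n_j}u_{j,i}$, $\widehat\Delta^R_{t,\ell}=\widehat\Delta_{t,\ell}/V_{t,\ell}$. $\sigma^2_{t,\ell}=\frac1{n_{t,\ell}}\sum_{j=t-\ell}^{t-1}n_j\operatorname{Var}(u_{j,1})$ and $\sigma^R_{t,\ell}=\sigma_{t,\ell}/V_{t,\ell}$. *)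

theory Defs
  imports "HOL-Probability.Probability"
begin

definition sqloss :: "('x \<Rightarrow> real) \<Rightarrow> 'x \<times> real \<Rightarrow> real" where
  "sqloss f z = (f (fst z) - snd z)^2"

definition risk :: "('x \<times> real) measure \<Rightarrow> ('x \<Rightarrow> real) \<Rightarrow> real" where
  "risk Pj f = integral\<^sup>L Pj (sqloss f)"

definition udiff :: "('x \<Rightarrow> real) \<Rightarrow> ('x \<Rightarrow> real) \<Rightarrow> 'x \<times> real \<Rightarrow> real" where
  "udiff f1 f2 z = sqloss f1 z - sqloss f2 z"

definition Vmom :: "('x \<times> real) measure \<Rightarrow> real" where
  "Vmom Pj = integral\<^sup>L Pj (\<lambda>z. (snd z)^2)"

definition Delta :: "(nat \<Rightarrow> ('x \<times> real) measure) \<Rightarrow> ('x \<Rightarrow> real) \<Rightarrow> ('x \<Rightarrow> real) \<Rightarrow> nat \<Rightarrow> real" where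
  "Delta P f1 f2 j = risk (P j) f1 - risk (P j) f2"

definition DeltaR :: "(nat \<Rightarrow> ('x \<times> real) measure) \<Rightarrow> ('x \<Rightarrow> real) \<Rightarrow> ('x \<Rightarrow> real) \<Rightarrow> nat \<Rightarrow> real" where
  "DeltaR P f1 f2 j = Delta P f1 f2 j / Vmom (P j)"

definition window :: "nat \<Rightarrow> nat \<Rightarrow> nat set" where
  "window t l = {t - l .. t - 1}"

definition ntl :: "(nat \<Rightarrow> nat) \<Rightarrow> nat \<Rightarrow> nat \<Rightarrow> nat" where
  "ntl n t l = (\<Sum>j\<in>window t l. n j)"

definition Vtl :: "(nat \<Rightarrow> ('x \<times> real) measure) \<Rightarrow> (nat \<Rightarrow> nat) \<Rightarrow> nat \<Rightarrow> nat \<Rightarrow> real" where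
  "Vtl P n t l = (1 / real (ntl n t l)) * (\<Sum>j\<in>window t l. real (n j) * Vmom (P j))"

definition uvar :: "('x \<times> real) measure \<Rightarrow> ('x \<Rightarrow> real) \<Rightarrow> ('x \<Rightarrow> real) \<Rightarrow> real" where
  "uvar Pj f1 f2 = integral\<^sup>L Pj (\<lambda>z. (udiff f1 f2 z - integral\<^sup>L Pj (udiff f1 f2))^2)"

definition sigma2tl :: "(nat \<Rightarrow> ('x \<times> real) measure) \<Rightarrow> ('x \<Rightarrow> real) \<Rightarrow> ('x \<Rightarrow> real) \<Rightarrow> (nat \<Rightarrow> nat) \<Rightarrow> nat \<Rightarrow> nat \<Rightarrow> real" where
  "sigma2tl P f1 f2 n t l = (1 / real (ntl n t l)) * (\<Sum>j\<in>window t l. real (n j) * uvar (P j) f1 f2)"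

definition sigmaRtl :: "(nat \<Rightarrow> ('x \<times> real) measure) \<Rightarrow> ('x \<Rightarrow> real) \<Rightarrow> ('x \<Rightarrow> real) \<Rightarrow> (nat \<Rightarrow> nat) \<Rightarrow> nat \<Rightarrow> nat \<Rightarrow> real" where
  "sigmaRtl P f1 f2 n t l = sqrt (sigma2tl P f1 f2 n t l) / Vtl P n t l"

text \<open>Empirical estimator; sample i of period j is Z j i (indices i < n j).\<close>
definition Deltahat :: "(nat \<Rightarrow> nat \<Rightarrow> 'a \<Rightarrow> 'x \<times> real) \<Rightarrow> ('x \<Rightarrow> real) \<Rightarrow> ('x \<Rightarrow> real) \<Rightarrow> (nat \<Rightarrow> nat) \<Rightarrow> nat \<Rightarrow> nat \<Rightarrow> 'a \<Rightarrow> real" where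
  "Deltahat Z f1 f2 n t l \<omega> = (1 / real (ntl n t l)) * (\<Sum>j\<in>window t l. \<Sum>i<n j. udiff f1 f2 (Z j i \<omega>))"

definition DeltahatR :: "(nat \<Rightarrow> ('x \<times> real) measure) \<Rightarrow> (nat \<Rightarrow> nat \<Rightarrow> 'a \<Rightarrow> 'x \<times> real) \<Rightarrow> ('x \<Rightarrow> real) \<Rightarrow> ('x \<Rightarrow> real) \<Rightarrow> (nat \<Rightarrow> nat) \<Rightarrow> nat \<Rightarrow> nat \<Rightarrow> 'a \<Rightarrow> real" where
  "DeltahatR P Z f1 f2 n t l \<omega> = Deltahat Z f1 f2 n t l \<omega> / Vtl P n t l"

definition phiR :: "(nat \<Rightarrow> ('x \<times> real) measure) \<Rightarrow> ('x \<Rightarrow> real) \<Rightarrow> ('x \<Rightarrow> real) \<Rightarrow> nat \<Rightarrow> nat \<Rightarrow> real" where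
  "phiR P f1 f2 t l = Max ((\<lambda>j. \<bar>DeltaR P f1 f2 j - DeltaR P f1 f2 t\<bar>) ` window t l)"

definition psiR :: "(nat \<Rightarrow> ('x \<times> real) measure) \<Rightarrow> ('x \<Rightarrow> real) \<Rightarrow> ('x \<Rightarrow> real) \<Rightarrow> (nat \<Rightarrow> nat) \<Rightarrow> real \<Rightarrow> real \<Rightarrow> nat \<Rightarrow> nat \<Rightarrow> real \<Rightarrow> real" where
  "psiR P f1 f2 n M v t l \<delta> =
     (if ntl n t l = 1 then 8 * M^2 / v
      else sigmaRtl P f1 f2 n t l * sqrt (2 * ln (2 / \<delta>) / real (ntl n t l))
           + 16 * (M^2 / v) * ln (2 / \<delta>) / (3 * real (ntl n t l)))"

end

theory Submission
  imports Defs
begin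


lemma fact_ge_3pow: "2 * 3 ^ k \<le> (fact (k + 2) :: real)"
proof (induction k)
  case 0 then show ?case by simp
next
  case (Suc k)
  have "fact (Suc k + 2) = real (k + 3) * (fact (k + 2) :: real)"
    by (simp add: fact_Suc[of "k+2"] algebra_simps)
  also have "\<dots> \<ge> 3 * fact (k+2)" by (intro mult_right_mono) auto
  moreover have "2 * 3 ^ Suc k = 3 * (2 * 3 ^ k :: real)" by simp
  ultimately show ?case using Suc by linarith
qed

lemma exp_neg_quad:
  fixes x :: real assumes "x \<le> 0" shows "exp x \<le> 1 + x + x^2/2"
proof -
  let ?h = "\<lambda>x::real. 1 + x + x^2/2 - exp x"
  have "?h 0 \<le> ?h x"
  proof (rule DERIV_nonpos_imp_nonincreasing[OF assms])
    fix y :: real assume "x \<le> y" "y \<le> 0"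
    show "\<exists>d. (?h has_real_derivative d) (at y) \<and> d \<le> 0"
      by (rule exI[of _ "1 + y - exp y"]) (auto intro!: derivative_eq_intros simp: exp_ge_add_one_self)
  qed
  then show ?thesis by simp
qed

lemma exp_pos_bern:
  fixes x :: real assumes "0 \<le> x" "x < 3" shows "exp x \<le> 1 + x + x^2/(2*(1-x/3))"
proof -
  have s1: "(\<lambda>k. x^k / fact k) sums exp x"
    using exp_converges[of x] by (simp add: divide_inverse_commute scaleR_conv_of_real)
  have s2: "(\<lambda>k. x^(k+2) / fact (k+2)) sums (exp x - (\<Sum>k<2. x^k / fact k))"
    by (rule sums_split_initial_segment[OF s1])
  have s3: "(\<lambda>k. x^2/2 * (x/3)^k) sums (x^2/2 * (1 / (1 - x/3)))"
    by (rule sums_mult, rule geometric_sums) (use assms in auto)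
  have le: "x^(k+2) / fact (k+2) \<le> x^2/2 * (x/3)^k" for k
  proof -
    have "x^(k+2) / fact (k+2) \<le> x^(k+2) / (2*3^k)"
      by (rule divide_left_mono) (use assms fact_ge_3pow[of k] in auto)
    also have "\<dots> = x^2/2 * (x/3)^k" by (simp add: power_add power_divide field_simps power2_eq_square)
    finally show ?thesis .
  qed
  have "exp x - (\<Sum>k<2. x^k / fact k) \<le> x^2/2 * (1 / (1 - x/3))"
    by (rule sums_le[OF le s2 s3])
  then show ?thesis by (simp add: numeral_2_eq_2 field_simps)
qed

lemma sq_le_of_abs: "\<bar>y::real\<bar> \<le> B \<Longrightarrow> y^2 \<le> B^2"
  using power_mono[of "\<bar>y\<bar>" B 2] by simp

lemma exp_bern_bound:
  fixes x c :: real assumes "0 \<le> c" "c < 3" "x \<le> c"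
  shows "exp x \<le> 1 + x + x^2/(2*(1-c/3))"
proof (cases "x \<le> 0")
  case True
  have "exp x \<le> 1 + x + x^2/2" by (rule exp_neg_quad[OF True])
  also have "x^2/2 \<le> x^2/(2*(1-c/3))"
    by (rule divide_left_mono) (use assms in auto)
  finally show ?thesis by simp
next
  case False
  have "exp x \<le> 1 + x + x^2/(2*(1-x/3))" by (rule exp_pos_bern) (use False assms in auto)
  also have "x^2/(2*(1-x/3)) \<le> x^2/(2*(1-c/3))"
    by (rule divide_left_mono) (use assms False in auto)
  finally show ?thesis by simp
qed

lemma (in prob_space) bern_mgf:
  assumes rv[measurable]: "random_variable borel X"
    and bdd: "AE x in M. \<bar>X x\<bar> \<le> B"
    and up: "AE x in M. X x \<le> b"
    and E0: "expectation X = 0"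
    and s: "0 \<le> s" "0 \<le> s*b" "s*b < 3"
  shows "(\<integral>\<^sup>+x. ennreal (exp (s * X x)) \<partial>M)
           \<le> ennreal (exp (s^2 * expectation (\<lambda>x. (X x)^2) / (2*(1 - s*b/3))))"
proof -
  define K where "K = 2*(1 - s*b/3)"
  have K: "K > 0" using s by (simp add: K_def mult.commute)
  have intX: "integrable M X"
    by (rule integrable_const_bound[where B=B]) (use bdd in auto)
  have intX2: "integrable M (\<lambda>x. (X x)^2)"
    by (rule integrable_const_bound[where B="B^2"])
       (use bdd in \<open>auto elim!: eventually_mono intro: sq_le_of_abs\<close>)
  define g where "g = (\<lambda>x. 1 + s * X x + (s * X x)^2 / K)"
  have intg: "integrable M g"
    unfolding g_def power_mult_distrib
    by (intro Bochner_Integration.integrable_add integrable_const integrable_mult_right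
          integrable_divide intX intX2)
  have AEg: "AE x in M. exp (s * X x) \<le> g x"
    using up
  proof eventually_elim
    case (elim x)
    have "s * X x \<le> s * b" using elim s by (intro mult_left_mono) auto
    then show ?case unfolding g_def K_def by (intro exp_bern_bound) (use s in auto)
  qed
  have "(\<integral>\<^sup>+x. ennreal (exp (s * X x)) \<partial>M) \<le> (\<integral>\<^sup>+x. ennreal (g x) \<partial>M)"
    by (intro nn_integral_mono_AE) (use AEg in \<open>auto elim!: eventually_mono intro: ennreal_leI\<close>)
  also have "\<dots> = ennreal (expectation g)"
    by (intro nn_integral_eq_integral intg) (use AEg in \<open>auto elim!: eventually_mono intro: order.trans[OF less_imp_le[OF exp_gt_zero]]\<close>)
  also have "expectation g = 1 + s^2 * expectation (\<lambda>x. (X x)^2) / K"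
    unfolding g_def power_mult_distrib
    using intX intX2 E0 by (simp add: prob_space)
  also have "\<dots> \<le> exp (s^2 * expectation (\<lambda>x. (X x)^2) / K)"
    using exp_ge_add_one_self by simp
  finally show ?thesis by (simp add: K_def ennreal_leI)
qed


lemma (in prob_space) bernstein_ge:
  assumes fin: "finite I" and indep: "indep_vars (\<lambda>_. borel) X I"
    and bdd: "\<And>i. i \<in> I \<Longrightarrow> AE x in M. \<bar>X i x\<bar> \<le> B"
    and up: "\<And>i. i \<in> I \<Longrightarrow> AE x in M. X i x \<le> b"
    and E0: "\<And>i. i \<in> I \<Longrightarrow> expectation (X i) = 0"
    and b: "b > 0" and t: "t > 0"
    and V: "V = (\<Sum>i\<in>I. expectation (\<lambda>x. (X i x)^2))"
  shows "prob {x\<in>space M. (\<Sum>i\<in>I. X i x) \<ge> t} \<le> exp (-(t^2) / (2*(V + b*t/3)))"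
proof -
  have rv[measurable]: "random_variable borel (X i)" if "i \<in> I" for i
    using that indep unfolding indep_vars_def by blast
  have meas[measurable]: "(\<lambda>x. \<Sum>i\<in>I. X i x) \<in> borel_measurable M"
    by (intro borel_measurable_sum rv)
  have intX2: "integrable M (\<lambda>x. (X i x)^2)" if "i \<in> I" for i
    by (rule integrable_const_bound[where B="B^2"])
       (use bdd[OF that] that in \<open>auto elim!: eventually_mono intro: sq_le_of_abs\<close>)
  have vnn: "expectation (\<lambda>x. (X i x)^2) \<ge> 0" for i by simp
  have "V \<ge> 0" unfolding V by (intro sum_nonneg vnn)
  show ?thesis
  proof (cases "V = 0")
    case True
    have "\<forall>i\<in>I. expectation (\<lambda>x. (X i x)^2) = 0"
      using True unfolding V by (subst (asm) sum_nonneg_eq_0_iff) (auto simp: fin)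
    have "AE x in M. (X i x)^2 = 0" if "i \<in> I" for i
      using \<open>\<forall>i\<in>I. _\<close> that integral_nonneg_eq_0_iff_AE[OF intX2[OF that]] by auto
    then have "AE x in M. \<forall>i\<in>I. (X i x)^2 = 0"
      by (subst AE_finite_all[OF fin]) blast
    then have "AE x in M. x \<notin> {x\<in>space M. (\<Sum>i\<in>I. X i x) \<ge> t}"
      by eventually_elim (use t in auto)
    then have "prob {x\<in>space M. (\<Sum>i\<in>I. X i x) \<ge> t} = 0"
      by (subst prob_eq_0) auto
    then show ?thesis by simp
  next
    case False
    with \<open>V \<ge> 0\<close> have Vp: "V > 0" by simp
    define D where "D = V + b*t/3"
    have D: "D > 0" using Vp b t by (simp add: D_def add_pos_pos)
    define s where "s = t / D"
    have s: "s > 0" using t D by (simp add: s_def)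
    have sb: "s * b < 3"
    proof -
      have "s * b = 3 * (b*t/3) / D" by (simp add: s_def)
      also have "\<dots> < 3 * D / D" using Vp D b t by (intro divide_strict_right_mono) (auto simp: D_def)
      finally show ?thesis using D by simp
    qed
    have "ennreal (prob {x\<in>space M. (\<Sum>i\<in>I. X i x) \<ge> t}) = emeasure M {x\<in>space M. (\<Sum>i\<in>I. X i x) \<ge> t}"
      by (simp add: emeasure_eq_measure)
    also have "\<dots> \<le> ennreal (exp (-s*t)) * (\<integral>\<^sup>+x\<in>space M. exp (s * (\<Sum>i\<in>I. X i x)) \<partial>M)"
      by (intro Chernoff_ineq_nn_integral_ge s) auto
    also have "(\<integral>\<^sup>+x\<in>space M. exp (s * (\<Sum>i\<in>I. X i x)) \<partial>M) =
               (\<integral>\<^sup>+x. (\<Prod>i\<in>I. ennreal (exp (s * X i x))) \<partial>M)"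
      by (intro nn_integral_cong)
         (simp_all add: sum_distrib_left exp_sum fin prod_ennreal)
    also have "\<dots> = (\<Prod>i\<in>I. \<integral>\<^sup>+x. ennreal (exp (s * X i x)) \<partial>M)"
      by (intro indep_vars_nn_integral fin indep_vars_compose2[OF indep]) auto
    also have "ennreal (exp (-s * t)) * \<dots> \<le>
               ennreal (exp (-s * t)) * (\<Prod>i\<in>I. ennreal (exp (s^2 * expectation (\<lambda>x. (X i x)^2) / (2*(1 - s*b/3)))))"
    proof (intro mult_left_mono prod_mono_ennreal)
      fix i assume i: "i \<in> I"
      show "(\<integral>\<^sup>+x. ennreal (exp (s * X i x)) \<partial>M) \<le> ennreal (exp (s^2 * expectation (\<lambda>x. (X i x)^2) / (2*(1 - s*b/3))))"
        by (rule bern_mgf[OF rv[OF i] bdd[OF i] up[OF i] E0[OF i]]) (use s b sb in auto)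
    qed auto
    also have "\<dots> = ennreal (exp (-s*t) * (\<Prod>i\<in>I. exp (s^2 * expectation (\<lambda>x. (X i x)^2) / (2*(1 - s*b/3)))))"
      by (simp add: prod_ennreal prod_nonneg flip: ennreal_mult)
    also have "exp (-s*t) * (\<Prod>i\<in>I. exp (s^2 * expectation (\<lambda>x. (X i x)^2) / (2*(1 - s*b/3))))
               = exp (-s*t + s^2 * V / (2*(1 - s*b/3)))"
      by (simp add: exp_add exp_sum[OF fin, symmetric] V sum_divide_distrib sum_distrib_left exp_diff exp_minus field_simps)
    also have "-s*t + s^2 * V / (2*(1 - s*b/3)) = -(t^2) / (2*D)"
    proof -
      have e: "1 - s*b/3 = V / D" using D by (simp add: s_def D_def field_simps)
      have "s^2 * V / (2*(1 - s*b/3)) = s^2 * D / 2" unfolding e using Vp D by (simp add: field_simps)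
      then show ?thesis using D by (simp add: s_def field_simps power2_eq_square)
    qed
    finally show ?thesis
      by (subst (asm) ennreal_le_iff) (simp_all add: D_def)
  qed
qed


lemma (in prob_space) bernstein_abs:
  assumes fin: "finite I" and indep: "indep_vars (\<lambda>_. borel) X I"
    and bdd: "\<And>i. i \<in> I \<Longrightarrow> AE x in M. \<bar>X i x\<bar> \<le> b"
    and E0: "\<And>i. i \<in> I \<Longrightarrow> expectation (X i) = 0"
    and b: "b > 0" and d: "0 < d" "d < 1"
    and V: "V = (\<Sum>i\<in>I. expectation (\<lambda>x. (X i x)^2))"
  shows "prob {x\<in>space M. \<bar>\<Sum>i\<in>I. X i x\<bar> > sqrt (2 * ln (2/d) * V) + 2 * b * ln (2/d) / 3} \<le> d"
proof -
  define L where "L = ln (2/d)"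
  have L: "L > 0" using d by (simp add: L_def)
  have "V \<ge> 0" unfolding V by (intro sum_nonneg) simp
  define T where "T = sqrt (2 * L * V) + 2 * b * L / 3"
  have T: "T > 0" using L b \<open>V \<ge> 0\<close> by (simp add: T_def add_nonneg_pos)
  have rv[measurable]: "random_variable borel (X i)" if "i \<in> I" for i
    using that indep unfolding indep_vars_def by blast
  have key: "exp (-(T^2) / (2*(V + b*T/3))) \<le> d/2"
  proof -
    define a where "a = sqrt (2 * L * V)"
    have a: "a \<ge> 0" "a^2 = 2 * L * V" using L \<open>V \<ge> 0\<close> by (auto simp: a_def)
    have "T^2 \<ge> 2*L*(V + b*T/3)"
      using a L b unfolding T_def a_def[symmetric]
      by (simp add: power2_eq_square algebra_simps mult_nonneg_nonneg)
    then have "-(T^2) / (2*(V + b*T/3)) \<le> -L"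
      using \<open>V \<ge> 0\<close> b T by (simp add: field_simps add_nonneg_pos)
    then have "exp (-(T^2) / (2*(V + b*T/3))) \<le> exp (-L)" by simp
    also have "exp (-L) = d/2" using d by (simp add: L_def exp_minus)
    finally show ?thesis .
  qed
  have p1: "prob {x\<in>space M. (\<Sum>i\<in>I. X i x) \<ge> T} \<le> d/2"
    by (rule order.trans[OF bernstein_ge[OF fin indep bdd _ E0 b T V] key])
       (auto elim!: eventually_mono dest: bdd)
  have p2: "prob {x\<in>space M. (\<Sum>i\<in>I. - X i x) \<ge> T} \<le> d/2"
  proof (rule order.trans[OF bernstein_ge[OF fin _ _ _ _ b T] key])
    show "indep_vars (\<lambda>_. borel) (\<lambda>i x. - X i x) I"
      by (rule indep_vars_compose2[OF indep]) auto
    show "AE x in M. \<bar>- X i x\<bar> \<le> b" if "i \<in> I" for i using bdd[OF that] by simp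
    show "AE x in M. - X i x \<le> b" if "i \<in> I" for i using bdd[OF that] by (auto elim!: eventually_mono)
    show "expectation (\<lambda>x. - X i x) = 0" if "i \<in> I" for i using E0[OF that] by simp
    show "V = (\<Sum>i\<in>I. expectation (\<lambda>x. (- X i x)^2))" by (simp add: V)
  qed
  have "{x\<in>space M. \<bar>\<Sum>i\<in>I. X i x\<bar> > T} \<subseteq>
        {x\<in>space M. (\<Sum>i\<in>I. X i x) \<ge> T} \<union> {x\<in>space M. (\<Sum>i\<in>I. - X i x) \<ge> T}"
    by (auto simp: sum_negf)
  then have "prob {x\<in>space M. \<bar>\<Sum>i\<in>I. X i x\<bar> > T} \<le>
        prob ({x\<in>space M. (\<Sum>i\<in>I. X i x) \<ge> T} \<union> {x\<in>space M. (\<Sum>i\<in>I. - X i x) \<ge> T})"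
    by (intro finite_measure_mono) auto
  also have "\<dots> \<le> prob {x\<in>space M. (\<Sum>i\<in>I. X i x) \<ge> T} + prob {x\<in>space M. (\<Sum>i\<in>I. - X i x) \<ge> T}"
    by (intro measure_Un_le) auto
  also have "\<dots> \<le> d" using p1 p2 by simp
  finally show ?thesis by (simp add: T_def L_def)
qed



lemma det_bound:
  fixes W :: "nat set" and n :: "nat \<Rightarrow> nat" and V D :: "nat \<Rightarrow> real"
  assumes fin: "finite W" and ne: "W \<noteq> {}" and npos: "\<And>j. j \<in> W \<Longrightarrow> n j \<ge> 1"
    and Vpos: "\<And>j. j \<in> W \<Longrightarrow> V j > 0"
    and B: "B = (\<Sum>j\<in>W. real (n j) * V j)"
    and close: "\<bar>Su - (\<Sum>j\<in>W. real (n j) * D j)\<bar> \<le> T"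
  shows "\<bar>Su / B - D t0 / V t0\<bar> \<le> Max ((\<lambda>j. \<bar>D j / V j - D t0 / V t0\<bar>) ` W) + T / B"
proof -
  define R where "R j = D j / V j" for j
  define ph where "ph = Max ((\<lambda>j. \<bar>R j - R t0\<bar>) ` W)"
  have phj: "\<bar>R j - R t0\<bar> \<le> ph" if "j \<in> W" for j
    unfolding ph_def using fin that by (intro Max_ge) auto
  have Bpos: "B > 0" unfolding B
    using ne fin npos Vpos by (intro sum_pos) (auto intro!: mult_pos_pos simp: Suc_le_eq)
  have DR: "D j = V j * R j" if "j \<in> W" for j using Vpos[OF that] by (simp add: R_def)
  define A where "A = (\<Sum>j\<in>W. real (n j) * D j)"
  have "A / B - R t0 = (\<Sum>j\<in>W. real (n j) * V j * (R j - R t0)) / B"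
    using Bpos unfolding A_def B
    by (simp add: field_simps sum_subtractf sum_distrib_right sum_distrib_left DR cong: sum.cong)
  then have "\<bar>A / B - R t0\<bar> = \<bar>\<Sum>j\<in>W. real (n j) * V j * (R j - R t0)\<bar> / B"
    using Bpos by simp
  also have "\<dots> \<le> (\<Sum>j\<in>W. real (n j) * V j * ph) / B"
  proof (intro divide_right_mono order.trans[OF sum_abs] sum_mono)
    fix j assume j: "j \<in> W"
    show "\<bar>real (n j) * V j * (R j - R t0)\<bar> \<le> real (n j) * V j * ph"
      using phj[OF j] Vpos[OF j] by (simp add: abs_mult mult_left_mono)
  qed (use Bpos in auto)
  also have "\<dots> = ph" using Bpos unfolding B by (simp add: sum_distrib_right[symmetric])
  finally have a: "\<bar>A / B - R t0\<bar> \<le> ph" .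
  have b: "\<bar>Su / B - A / B\<bar> \<le> T / B"
    using close Bpos unfolding A_def by (simp add: diff_divide_distrib[symmetric] divide_right_mono)
  have "\<bar>Su / B - R t0\<bar> \<le> \<bar>Su / B - A / B\<bar> + \<bar>A / B - R t0\<bar>" by linarith
  then show ?thesis using a b unfolding ph_def R_def by linarith
qed

theorem mainTheorem6:
  fixes \<Omega> :: "'a measure"
    and Xs :: "'x measure"
    and P :: "nat \<Rightarrow> ('x \<times> real) measure"
    and Z :: "nat \<Rightarrow> nat \<Rightarrow> 'a \<Rightarrow> 'x \<times> real"
    and n :: "nat \<Rightarrow> nat"
    and f1 f2 :: "'x \<Rightarrow> real"
    and M v \<delta> :: real
    and t l :: nat
  assumes prob: "prob_space \<Omega>"
    and P_prob: "\<And>j. prob_space (P j)"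
    and P_sets: "\<And>j. sets (P j) = sets (Xs \<Otimes>\<^sub>M borel)"
    and n_pos: "\<And>j. n j \<ge> 1"
    and Z_meas: "\<And>j i. Z j i \<in> measurable \<Omega> (Xs \<Otimes>\<^sub>M borel)"
    and Z_distr: "\<And>j i. i < n j \<Longrightarrow> distr \<Omega> (Xs \<Otimes>\<^sub>M borel) (Z j i) = P j"
    and Z_indep: "prob_space.indep_vars \<Omega> (\<lambda>_. Xs \<Otimes>\<^sub>M borel) (\<lambda>(j, i). Z j i)
                    {(j, i). j \<in> window t l \<and> i < n j}"
    and M_ge: "M \<ge> 1"
    and y_bdd: "\<And>j. AE z in P j. \<bar>snd z\<bar> \<le> M"
    and v_pos: "v > 0"
    and V_ge: "\<And>j. Vmom (P j) \<ge> v"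
    and t_ge: "t \<ge> 2"
    and l_range: "1 \<le> l" "l \<le> t - 1"
    and f1_meas: "f1 \<in> borel_measurable Xs"
    and f2_meas: "f2 \<in> borel_measurable Xs"
    and f1_bdd: "\<And>x. \<bar>f1 x\<bar> \<le> M"
    and f2_bdd: "\<And>x. \<bar>f2 x\<bar> \<le> M"
    and \<delta>_range: "0 < \<delta>" "\<delta> < 1"
  shows "measure \<Omega> {\<omega> \<in> space \<Omega>.
            \<bar>DeltahatR P Z f1 f2 n t l \<omega> - DeltaR P f1 f2 t\<bar>
              \<le> phiR P f1 f2 t l + psiR P f1 f2 n M v t l \<delta>} \<ge> 1 - \<delta>"
  proof -
  interpret O: prob_space \<Omega> by (rule prob)
  note [measurable] = Z_meas f1_meas f2_meas
  define I where "I = {(j, i). j \<in> window t l \<and> i < n j}"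
  define N where "N = ntl n t l"
  have finW: "finite (window t l)" by (simp add: window_def)
  have Wne: "window t l \<noteq> {}" using l_range t_ge by (auto simp: window_def)
  have I_Sigma: "I = Sigma (window t l) (\<lambda>j. {..<n j})" by (auto simp: I_def)
  have finI: "finite I" using finW by (simp add: I_Sigma)
  have cardI: "card I = N" by (simp add: I_Sigma N_def ntl_def card_SigmaI finW)
  obtain j0 where j0: "j0 \<in> window t l" using Wne by auto
  have "n j0 \<le> N" unfolding N_def ntl_def by (rule member_le_sum[OF j0]) (auto simp: finW)
  then have Npos: "N \<ge> 1" using n_pos[of j0] by simp
  have ud_eq: "udiff f1 f2 = (\<lambda>z. (f1 (fst z) - snd z)^2 - (f2 (fst z) - snd z)^2)"
    by (auto simp: fun_eq_iff udiff_def sqloss_def)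
  have ud_meas[measurable]: "udiff f1 f2 \<in> borel_measurable (Xs \<Otimes>\<^sub>M borel)"
    unfolding ud_eq by measurable
  have sq_meas: "sqloss f \<in> borel_measurable (Xs \<Otimes>\<^sub>M borel)" if "f \<in> borel_measurable Xs" for f
  proof -
    have "sqloss f = (\<lambda>z. (f (fst z) - snd z)^2)" by (auto simp: fun_eq_iff sqloss_def)
    then show ?thesis using that by simp
  qed
  have Pmeas: "g \<in> borel_measurable (P j)" if "g \<in> borel_measurable (Xs \<Otimes>\<^sub>M borel)" for g j
    unfolding measurable_cong_sets[OF P_sets[of j] refl] by (rule that)
  have sq_bdd: "\<bar>sqloss f z\<bar> \<le> 4 * M^2" if "\<And>x. \<bar>f x\<bar> \<le> M" "\<bar>snd z\<bar> \<le> M" for f z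
  proof -
    have "\<bar>f (fst z) - snd z\<bar> \<le> 2 * M" using that(1)[of "fst z"] that(2) by linarith
    then have "(f (fst z) - snd z)^2 \<le> (2*M)^2" by (rule sq_le_of_abs)
    then show ?thesis by (simp add: sqloss_def power_mult_distrib)
  qed
  have sq_nn: "sqloss f z \<ge> 0" for f z by (simp add: sqloss_def)
  have ud_bdd: "\<bar>udiff f1 f2 z\<bar> \<le> 4 * M^2" if "\<bar>snd z\<bar> \<le> M" for z
    using sq_bdd[of f1 z, OF f1_bdd that] sq_bdd[of f2 z, OF f2_bdd that] sq_nn[of f1 z] sq_nn[of f2 z]
    by (simp add: udiff_def)
  have int_sq: "integrable (P j) (sqloss f)" if "f \<in> borel_measurable Xs" "\<And>x. \<bar>f x\<bar> \<le> M" for f j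
    by (rule finite_measure.integrable_const_bound[OF prob_space.finite_measure[OF P_prob], where B="4*M^2"])
       (use y_bdd[of j] sq_bdd[OF that(2)] Pmeas[OF sq_meas[OF that(1)]] in \<open>auto elim!: eventually_mono\<close>)
  have int_ud: "integrable (P j) (udiff f1 f2)" for j
    by (rule finite_measure.integrable_const_bound[OF prob_space.finite_measure[OF P_prob], where B="4*M^2"])
       (use y_bdd[of j] ud_bdd Pmeas[OF ud_meas] in \<open>auto elim!: eventually_mono\<close>)
  have Delta_eq: "Delta P f1 f2 j = integral\<^sup>L (P j) (udiff f1 f2)" for j
    unfolding Delta_def risk_def udiff_def[abs_def]
    by (rule Bochner_Integration.integral_diff[symmetric]) (auto intro: int_sq f1_meas f2_meas f1_bdd f2_bdd)
  have Delta_bdd: "\<bar>Delta P f1 f2 j\<bar> \<le> 4 * M^2" for j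
  proof -
    interpret Pj: prob_space "P j" by (rule P_prob)
    have aeb: "AE z in P j. \<bar>udiff f1 f2 z\<bar> \<le> 4 * M^2"
      using y_bdd[of j] by (auto elim!: eventually_mono intro: ud_bdd)
    have "integral\<^sup>L (P j) (udiff f1 f2) \<le> 4 * M^2"
      by (rule Pj.integral_le_const[OF int_ud]) (rule eventually_mono[OF aeb], simp add: abs_le_iff)
    moreover have "integral\<^sup>L (P j) (udiff f1 f2) \<ge> - (4 * M^2)"
      by (rule Pj.integral_ge_const[OF int_ud]) (rule eventually_mono[OF aeb], simp add: abs_le_iff)
    ultimately show ?thesis by (simp add: Delta_eq abs_le_iff)
  qed
  have Vpos: "Vmom (P j) > 0" for j using V_ge[of j] v_pos by linarith
  have Z_int: "integral\<^sup>L \<Omega> (\<lambda>\<omega>. g (Z j i \<omega>)) = integral\<^sup>L (P j) g"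
    if "i < n j" "g \<in> borel_measurable (Xs \<Otimes>\<^sub>M borel)" for j i and g :: "'x \<times> real \<Rightarrow> real"
  proof -
    have "integral\<^sup>L (P j) g = integral\<^sup>L (distr \<Omega> (Xs \<Otimes>\<^sub>M borel) (Z j i)) g"
      using Z_distr[OF that(1)] by simp
    also have "\<dots> = integral\<^sup>L \<Omega> (\<lambda>\<omega>. g (Z j i \<omega>))"
      by (rule integral_distr[OF Z_meas that(2)])
    finally show ?thesis by simp
  qed
  have Z_ae: "AE \<omega> in \<Omega>. \<bar>snd (Z j i \<omega>)\<bar> \<le> M" if "i < n j" for j i
  proof -
    have "AE z in distr \<Omega> (Xs \<Otimes>\<^sub>M borel) (Z j i). \<bar>snd z\<bar> \<le> M"
      unfolding Z_distr[OF that] by (rule y_bdd)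
    then show ?thesis by (subst (asm) AE_distr_iff) auto
  qed
  define X where "X = (\<lambda>k \<omega>. udiff f1 f2 (case_prod Z k \<omega>) - Delta P f1 f2 (fst k))"
  have indep: "O.indep_vars (\<lambda>_. borel) X I"
    using O.indep_vars_compose2[OF Z_indep, where Y="\<lambda>k z. udiff f1 f2 z - Delta P f1 f2 (fst k)"
        and N="\<lambda>_. borel"]
    unfolding X_def I_def by (auto simp: case_prod_beta)
  have X_rv[measurable]: "X k \<in> borel_measurable \<Omega>" if "k \<in> I" for k
    using indep that unfolding O.indep_vars_def by blast
  have int_udZ: "integrable \<Omega> (\<lambda>\<omega>. udiff f1 f2 (Z j i \<omega>))" if "i < n j" for j i
    by (rule O.integrable_const_bound[where B="4*M^2"])
       (use Z_ae[OF that] in \<open>auto elim!: eventually_mono intro: ud_bdd\<close>)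
  have X_bdd: "AE \<omega> in \<Omega>. \<bar>X k \<omega>\<bar> \<le> 8*M^2" if kI: "k \<in> I" for k
  proof -
    obtain j i where k: "k = (j,i)" "i < n j" using kI by (auto simp: I_def)
    show ?thesis using Z_ae[OF k(2)]
    proof eventually_elim
      case (elim \<omega>)
      have "\<bar>udiff f1 f2 (Z j i \<omega>)\<bar> \<le> 4*M^2" using ud_bdd elim by blast
      then show ?case using Delta_bdd[of j] by (simp add: X_def k)
    qed
  qed
  have X_E0: "O.expectation (X k) = 0" if kI: "k \<in> I" for k
  proof -
    obtain j i where k: "k = (j,i)" "i < n j" using kI by (auto simp: I_def)
    have "O.expectation (X k) = O.expectation (\<lambda>\<omega>. udiff f1 f2 (Z j i \<omega>)) - Delta P f1 f2 j"
      unfolding X_def k using int_udZ[OF k(2)] by (simp add: O.prob_space)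
    also have "O.expectation (\<lambda>\<omega>. udiff f1 f2 (Z j i \<omega>)) = Delta P f1 f2 j"
      using Z_int[OF k(2) ud_meas] Delta_eq[of j] by simp
    finally show ?thesis by simp
  qed
  have X_var: "O.expectation (\<lambda>\<omega>. (X k \<omega>)^2) = uvar (P (fst k)) f1 f2" if kI: "k \<in> I" for k
  proof -
    obtain j i where k: "k = (j,i)" "i < n j" using kI by (auto simp: I_def)
    have gm: "(\<lambda>z. (udiff f1 f2 z - Delta P f1 f2 j)^2) \<in> borel_measurable (Xs \<Otimes>\<^sub>M borel)"
      by measurable
    show ?thesis
      using Z_int[OF k(2) gm] Delta_eq[of j] by (simp add: X_def k uvar_def)
  qed
  define Vs where "Vs = (\<Sum>k\<in>I. O.expectation (\<lambda>\<omega>. (X k \<omega>)^2))"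
  have Vs_sum: "Vs = (\<Sum>j\<in>window t l. real (n j) * uvar (P j) f1 f2)"
  proof -
    have "Vs = (\<Sum>k\<in>I. uvar (P (fst k)) f1 f2)" unfolding Vs_def by (rule sum.cong) (auto simp: X_var)
    also have "\<dots> = (\<Sum>j\<in>window t l. \<Sum>i<n j. uvar (P j) f1 f2)"
      unfolding I_Sigma by (subst sum.Sigma) (auto simp: finW case_prod_beta)
    finally show ?thesis by simp
  qed
  have Vs_eq: "sigma2tl P f1 f2 n t l = Vs / real N"
    unfolding sigma2tl_def Vs_sum N_def by simp
  have sumX: "(\<Sum>k\<in>I. X k \<omega>) = (\<Sum>j\<in>window t l. \<Sum>i<n j. udiff f1 f2 (Z j i \<omega>))
                 - (\<Sum>j\<in>window t l. real (n j) * Delta P f1 f2 j)" for \<omega>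
  proof -
    have "(\<Sum>k\<in>I. X k \<omega>) = (\<Sum>j\<in>window t l. \<Sum>i<n j. udiff f1 f2 (Z j i \<omega>) - Delta P f1 f2 j)"
      unfolding I_Sigma X_def by (subst sum.Sigma) (auto simp: finW case_prod_beta)
    then show ?thesis by (simp add: sum_subtractf)
  qed
  define L where "L = ln (2/\<delta>)"
  have L: "L > 0" using \<delta>_range by (simp add: L_def)
  define T where "T = (if N = 1 then 8*M^2 else sqrt (2*L*Vs) + 2*(8*M^2)*L/3)"
  define bad where "bad = {\<omega> \<in> space \<Omega>. \<bar>\<Sum>k\<in>I. X k \<omega>\<bar> > T}"
  have bad_meas: "bad \<in> O.events"
  proof -
    have "(\<lambda>\<omega>. \<Sum>k\<in>I. X k \<omega>) \<in> borel_measurable \<Omega>" by (intro borel_measurable_sum X_rv)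
    then show ?thesis unfolding bad_def by measurable
  qed
  have prob_bad: "O.prob bad \<le> \<delta>"
  proof (cases "N = 1")
    case True
    have "AE \<omega> in \<Omega>. \<forall>k\<in>I. \<bar>X k \<omega>\<bar> \<le> 8*M^2"
      by (subst AE_finite_all[OF finI]) (auto intro: X_bdd)
    then have "AE \<omega> in \<Omega>. \<omega> \<notin> bad"
    proof eventually_elim
      case (elim \<omega>)
      have "\<bar>\<Sum>k\<in>I. X k \<omega>\<bar> \<le> (\<Sum>k\<in>I. \<bar>X k \<omega>\<bar>)" by (rule sum_abs)
      also have "\<dots> \<le> (\<Sum>k\<in>I. 8*M^2)" using elim by (intro sum_mono) auto
      also have "\<dots> = T" using True cardI by (simp add: T_def)
      finally show ?case by (auto simp: bad_def)
    qed
    then have "O.prob bad = 0" using bad_meas by (subst O.prob_eq_0) auto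
    then show ?thesis using \<delta>_range by simp
  next
    case False
    have "O.prob bad = O.prob {\<omega> \<in> space \<Omega>. \<bar>\<Sum>k\<in>I. X k \<omega>\<bar> > sqrt (2 * ln (2/\<delta>) * Vs) + 2 * (8*M^2) * ln (2/\<delta>) / 3}"
      using False by (simp add: bad_def T_def L_def)
    also have "\<dots> \<le> \<delta>"
      by (rule O.bernstein_abs[OF finI indep X_bdd X_E0 _ \<delta>_range Vs_def]) (use M_ge in auto)
    finally show ?thesis .
  qed
  define B where "B = (\<Sum>j\<in>window t l. real (n j) * Vmom (P j))"
  have Bge: "B \<ge> real N * v"
  proof -
    have "real N * v = (\<Sum>j\<in>window t l. real (n j) * v)" by (simp add: N_def ntl_def sum_distrib_right)
    also have "\<dots> \<le> B" unfolding B_def by (intro sum_mono mult_left_mono V_ge) auto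
    finally show ?thesis .
  qed
  have Nv: "real N * v > 0" using Npos v_pos by simp
  have Bpos: "B > 0" using Bge Nv by linarith
  have TB: "T / B \<le> psiR P f1 f2 n M v t l \<delta>"
  proof (cases "N = 1")
    case True
    have "T / B = 8*M^2 / B" using True by (simp add: T_def)
    also have "\<dots> \<le> 8*M^2 / v" using Bge True v_pos by (intro divide_left_mono) auto
    finally show ?thesis using True by (simp add: psiR_def N_def)
  next
    case False
    have N0: "real N > 0" using Npos by simp
    have Vs0: "Vs \<ge> 0" unfolding Vs_def by (intro sum_nonneg) simp
    have e1: "sqrt (2*L*Vs) / B = sigmaRtl P f1 f2 n t l * sqrt (2 * L / real N)"
    proof -
      have sg: "sigmaRtl P f1 f2 n t l = sqrt (Vs / real N) / (B / real N)"
        unfolding sigmaRtl_def Vs_eq Vtl_def B_def N_def by simp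
      have "sqrt (Vs / real N) * sqrt (2 * L / real N) = sqrt (2*L*Vs) / real N"
      proof -
        have "sqrt (Vs / real N) * sqrt (2 * L / real N) = sqrt ((2*L*Vs) / (real N)^2)"
          by (simp add: real_sqrt_mult[symmetric] power2_eq_square field_simps)
        also have "\<dots> = sqrt (2*L*Vs) / real N" using N0 by (simp add: real_sqrt_divide)
        finally show ?thesis .
      qed
      note pr = this
      have "sigmaRtl P f1 f2 n t l * sqrt (2 * L / real N)
            = (sqrt (Vs / real N) * sqrt (2 * L / real N)) * real N / B"
        unfolding sg using N0 Bpos by (simp add: field_simps)
      also have "\<dots> = sqrt (2*L*Vs) / B" unfolding pr using N0 by simp
      finally show ?thesis by simp
    qed
    have e2: "2*(8*M^2)*L/3 / B \<le> 16 * (M^2 / v) * L / (3 * real N)"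
    proof -
      have "2*(8*M^2)*L/3 / B = (16*M^2*L) / (3*B)" by simp
      also have "\<dots> \<le> (16*M^2*L) / (3*(real N * v))"
        using Bge Nv L by (intro divide_left_mono) auto
      also have "\<dots> = 16 * (M^2 / v) * L / (3 * real N)" using v_pos N0 by (simp add: field_simps)
      finally show ?thesis .
    qed
    have "T / B = sqrt (2*L*Vs) / B + 2*(8*M^2)*L/3 / B" using False by (simp add: T_def add_divide_distrib)
    also have "\<dots> \<le> psiR P f1 f2 n M v t l \<delta>"
      using e1 e2 False by (simp add: psiR_def N_def L_def)
    finally show ?thesis .
  qed
  have good: "\<bar>DeltahatR P Z f1 f2 n t l \<omega> - DeltaR P f1 f2 t\<bar> \<le> phiR P f1 f2 t l + psiR P f1 f2 n M v t l \<delta>"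
    if "\<omega> \<in> space \<Omega> - bad" for \<omega>
  proof -
    define Su where "Su = (\<Sum>j\<in>window t l. \<Sum>i<n j. udiff f1 f2 (Z j i \<omega>))"
    have cl: "\<bar>Su - (\<Sum>j\<in>window t l. real (n j) * Delta P f1 f2 j)\<bar> \<le> T"
      using that sumX[of \<omega>] by (auto simp: bad_def Su_def)
    have db: "\<bar>Su / B - Delta P f1 f2 t / Vmom (P t)\<bar>
        \<le> Max ((\<lambda>j. \<bar>Delta P f1 f2 j / Vmom (P j) - Delta P f1 f2 t / Vmom (P t)\<bar>) ` window t l) + T / B"
      by (rule det_bound[OF finW Wne n_pos Vpos B_def cl])
    have "DeltahatR P Z f1 f2 n t l \<omega> = Su / B"
      using Npos unfolding DeltahatR_def Deltahat_def Vtl_def Su_def B_def N_def by simp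
    then show ?thesis using db TB unfolding phiR_def DeltaR_def by simp
  qed
  have good_meas: "{\<omega> \<in> space \<Omega>. \<bar>DeltahatR P Z f1 f2 n t l \<omega> - DeltaR P f1 f2 t\<bar>
              \<le> phiR P f1 f2 t l + psiR P f1 f2 n M v t l \<delta>} \<in> O.events"
  proof -
    have "(\<lambda>\<omega>. (\<Sum>j\<in>window t l. \<Sum>i<n j. udiff f1 f2 (Z j i \<omega>))) \<in> borel_measurable \<Omega>"
      by measurable
    then have "DeltahatR P Z f1 f2 n t l \<in> borel_measurable \<Omega>"
      unfolding DeltahatR_def[abs_def] Deltahat_def by measurable
    then show ?thesis by measurable
  qed
  have "1 - \<delta> \<le> O.prob (space \<Omega> - bad)" using prob_bad O.prob_compl[OF bad_meas] by simp
  also have "\<dots> \<le> O.prob {\<omega> \<in> space \<Omega>. \<bar>DeltahatR P Z f1 f2 n t l \<omega> - DeltaR P f1 f2 t\<bar>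
              \<le> phiR P f1 f2 t l + psiR P f1 f2 n M v t l \<delta>}"
    by (intro O.finite_measure_mono good_meas) (use good in auto)
  finally show ?thesis .
qed

end
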